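(* Under the hypotheses of Theorem 2 (namely: $(x_n)$ real with discrepancy $D_N$, $M_N=\max_{n\le N}nD_n$, $g$ positive monotonically decreasing with $g(N)/D_N\to\infty$, $Ng(N)\to\infty$ and $g\!\left(N\left(1+\frac{M_N}{Ng(N)}\right)\right)/g(N)\to1$), with $z_n$ independent and uniform on $[-g(n),g(n)]$, fix $s>0$ and define for $x\in\mathbb{R}$ $$h_{s,N}(x)=\sum_{n=1}^N\mathbb{P}\big(\|x_n+z_n-x\|<s/N\big).$$ Then $h_{s,N}(x)\to 2s$ as $N\to\infty$, uniformly in $x$.
   Context: $\|y\|$ denotes the distance from $y$ to the nearest integer. The discrepancy of $(x_n)$ is $D_N=\sup_{0\le a\le b\le 1}\left|\frac{\#\{n\le N:\{x_n\}\in[a,b]\}}{N}-(b-a)\right|$, where $\{x\}$ is the fractional part. *)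

theory Defs
  imports "HOL-Probability.Probability"
begin

definition dist_int :: "real \<Rightarrow> real" where
  "dist_int y = (INF k::int. \<bar>y - of_int k\<bar>)"

definition discrepancy :: "(nat \<Rightarrow> real) \<Rightarrow> nat \<Rightarrow> real" where
  "discrepancy x N = Sup {\<bar>real (card {n \<in> {1..N}. frac (x n) \<in> {a..b}}) / real N - (b - a)\<bar>
                          | a b. 0 \<le> a \<and> a \<le> b \<and> b \<le> 1}"

definition maxdisc :: "(nat \<Rightarrow> real) \<Rightarrow> nat \<Rightarrow> real" where
  "maxdisc x N = Max {real n * discrepancy x n | n. 1 \<le> n \<and> n \<le> N}"

definition hfun :: "(nat \<Rightarrow> real) \<Rightarrow> (real \<Rightarrow> real) \<Rightarrow> real \<Rightarrow> nat \<Rightarrow> real \<Rightarrow> real" where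
  "hfun x g s N y = (\<Sum>n = 1..N.
      measure (uniform_measure lborel {- g (real n) .. g (real n)})
              {z. dist_int (x n + z - y) < s / real N})"

end

theory Submission
  imports Defs
begin


lemma disc_bdd:
  "bdd_above {\<bar>real (card {n \<in> {1..N}. frac (x n) \<in> {a..b}}) / real N - (b - a)\<bar>
                          | a b. 0 \<le> a \<and> a \<le> b \<and> b \<le> 1}"
proof (rule bdd_aboveI[of _ 2], clarify)
  fix a b :: real assume ab: "0 \<le> a" "a \<le> b" "b \<le> 1"
  have c: "card {n \<in> {1..N}. frac (x n) \<in> {a..b}} \<le> N"
  proof -
    have "card {n \<in> {1..N}. frac (x n) \<in> {a..b}} \<le> card {1..N}" by (rule card_mono) auto
    then show ?thesis by simp
  qed
  have "real (card {n \<in> {1..N}. frac (x n) \<in> {a..b}}) / real N \<le> 1"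
    using c by (cases "N = 0") (auto simp: divide_le_eq)
  moreover have "real (card {n \<in> {1..N}. frac (x n) \<in> {a..b}}) / real N \<ge> 0" by simp
  ultimately show "\<bar>real (card {n \<in> {1..N}. frac (x n) \<in> {a..b}}) / real N - (b - a)\<bar> \<le> 2"
    using ab by linarith
qed

lemma disc_ge:
  assumes "0 \<le> a" "a \<le> b" "b \<le> 1"
  shows "\<bar>real (card {n \<in> {1..N}. frac (x n) \<in> {a..b}}) / real N - (b - a)\<bar> \<le> discrepancy x N"
  unfolding discrepancy_def
  by (rule cSup_upper[OF _ disc_bdd]) (use assms in blast)

lemma disc_count:
  assumes "0 \<le> a" "a \<le> b" "b \<le> 1" "N \<ge> 1"
  shows "\<bar>real (card {n \<in> {1..N}. frac (x n) \<in> {a..b}}) - real N * (b - a)\<bar> \<le> real N * discrepancy x N"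
proof -
  have "\<bar>real (card {n \<in> {1..N}. frac (x n) \<in> {a..b}}) - real N * (b - a)\<bar>
      = real N * \<bar>real (card {n \<in> {1..N}. frac (x n) \<in> {a..b}}) / real N - (b - a)\<bar>"
    using assms(4) by (simp add: abs_mult[symmetric] field_simps)
  also have "\<dots> \<le> real N * discrepancy x N"
    using disc_ge[OF assms(1-3)] by (intro mult_left_mono) auto
  finally show ?thesis .
qed

lemma disc_nonneg: "discrepancy x N \<ge> 0"
  using order_trans[OF abs_ge_zero disc_ge[of 0 0 N x]] by simp

lemma disc_one: "discrepancy x 1 \<ge> 1"
proof -
  have "{n \<in> {1..1::nat}. frac (x n) \<in> {frac (x 1)..frac (x 1)}} = {1}" by auto
  then show ?thesis using disc_ge[of "frac (x 1)" "frac (x 1)" 1 x] by (simp add: less_imp_le[OF frac_lt_1])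
qed



definition cnt :: "real \<Rightarrow> real \<Rightarrow> nat" where
  "cnt t b = card {k::int. \<bar>t - of_int k\<bar> \<le> b}"

lemma cnt_set: "{k::int. \<bar>t - of_int k\<bar> \<le> b} = {\<lceil>t - b\<rceil>..\<lfloor>t + b\<rfloor>}"
  by (auto simp: abs_le_iff ceiling_le_iff le_floor_iff)

lemma cnt_formula:
  assumes "b \<ge> 0"
  shows "real (cnt t b) = of_int \<lfloor>2*b\<rfloor> + (if frac (b - t) \<le> frac (2*b) then 1 else 0)"
proof -
  define u where "u = t - b"
  define f where "f = frac (b - t)"
  define r where "r = frac (2*b)"
  have f: "0 \<le> f" "f < 1" unfolding f_def by (auto simp: frac_lt_1)
  have r: "0 \<le> r" "r < 1" unfolding r_def by (auto simp: frac_lt_1)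
  have ceil: "of_int \<lceil>u\<rceil> = u + f"
    unfolding f_def u_def frac_def ceiling_def by simp
  have tb: "t + b = of_int \<lceil>u\<rceil> + (r - f) + of_int \<lfloor>2*b\<rfloor>"
    using ceil unfolding r_def u_def frac_def by simp
  have fl: "\<lfloor>t + b\<rfloor> = \<lceil>u\<rceil> + \<lfloor>2*b\<rfloor> + (if f \<le> r then 0 else -1)"
  proof (cases "f \<le> r")
    case True
    then show ?thesis using tb r f by (intro floor_unique) auto
  next
    case False
    then show ?thesis using tb r f by (intro floor_unique) auto
  qed
  have "cnt t b = nat (\<lfloor>t + b\<rfloor> - \<lceil>u\<rceil> + 1)"
    unfolding cnt_def cnt_set u_def by simp
  moreover have "\<lfloor>2*b\<rfloor> \<ge> 0" using assms by simp
  ultimately show ?thesis using fl unfolding f_def[symmetric] r_def[symmetric] by auto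
qed

lemma frac_cond:
  assumes "0 \<le> r" "r < 1"
  shows "frac (c - y) \<le> r \<longleftrightarrow>
     (frac y \<in> {max 0 (frac c - r)..frac c} \<or> frac y \<in> {min 1 (frac c + 1 - r)..1})"
proof (cases "frac y \<le> frac c")
  case True
  then show ?thesis using frac_diff_pos[OF True] assms frac_lt_1[of y] by auto
next
  case False
  then have "frac c < frac y" by simp
  from frac_diff_neg[OF this] show ?thesis using False assms frac_lt_1[of y] by auto
qed

lemma S_bound:
  assumes "b \<ge> 0"
  shows "\<bar>(\<Sum>n\<in>{1..K}. real (cnt (x n - w) b)) - 2*b*real K\<bar> \<le> 2 * real K * discrepancy x K"
proof (cases "K = 0")
  case True then show ?thesis by simp
next
  case False
  then have K: "K \<ge> 1" by simp
  define c where "c = b + w"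
  define e where "e = frac c"
  define r where "r = frac (2*b)"
  have r: "0 \<le> r" "r < 1" unfolding r_def by (auto simp: frac_lt_1)
  have e: "0 \<le> e" "e < 1" unfolding e_def by (auto simp: frac_lt_1)
  define A1 where "A1 = {n \<in> {1..K}. frac (x n) \<in> {max 0 (e - r)..e}}"
  define A2 where "A2 = {n \<in> {1..K}. frac (x n) \<in> {min 1 (e + 1 - r)..1}}"
  have eq: "frac (b - (x n - w)) \<le> r \<longleftrightarrow> n \<in> A1 \<union> A2" if "n \<in> {1..K}" for n
    using that frac_cond[OF r, of c "x n"] unfolding A1_def A2_def e_def c_def
    by (simp add: algebra_simps)
  have sum1: "(\<Sum>n\<in>{1..K}. real (cnt (x n - w) b))
       = (\<Sum>n\<in>{1..K}. of_int \<lfloor>2*b\<rfloor> + (if n \<in> A1 \<union> A2 then 1 else 0))"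
    using eq by (intro sum.cong refl) (auto simp: cnt_formula[OF assms] r_def)
  have "A1 \<union> A2 \<subseteq> {1..K}" unfolding A1_def A2_def by auto
  then have "(\<Sum>n\<in>{1..K}. (if n \<in> A1 \<union> A2 then 1 else 0::real)) = real (card (A1 \<union> A2))"
  proof -
    assume sub: "A1 \<union> A2 \<subseteq> {1..K}"
    have "{1..K} \<inter> {n. n \<in> A1 \<union> A2} = A1 \<union> A2" using sub by auto
    then show ?thesis by (simp add: sum.If_cases)
  qed
  also have "card (A1 \<union> A2) = card A1 + card A2"
  proof (rule card_Un_disjoint)
    show "finite A1" "finite A2" unfolding A1_def A2_def by auto
    show "A1 \<inter> A2 = {}"
    proof (rule ccontr)
      assume "A1 \<inter> A2 \<noteq> {}"
      then obtain n where "n \<in> A1" "n \<in> A2" by blast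
      then have "frac (x n) \<le> e" "min 1 (e + 1 - r) \<le> frac (x n)" unfolding A1_def A2_def by auto
      then show False using r frac_lt_1[of "x n"] by (auto simp: min_def split: if_splits)
    qed
  qed
  finally have sum2: "(\<Sum>n\<in>{1..K}. real (cnt (x n - w) b))
        = real K * of_int \<lfloor>2*b\<rfloor> + real (card A1) + real (card A2)"
    unfolding sum1 sum.distrib by simp
  have d1: "\<bar>real (card A1) - real K * (e - max 0 (e - r))\<bar> \<le> real K * discrepancy x K"
    unfolding A1_def by (rule disc_count) (use r e K in auto)
  have d2: "\<bar>real (card A2) - real K * (1 - min 1 (e + 1 - r))\<bar> \<le> real K * discrepancy x K"
    unfolding A2_def by (rule disc_count) (use r e K in auto)
  have len: "(e - max 0 (e - r)) + (1 - min 1 (e + 1 - r)) = r" by auto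
  have tb: "2*b = of_int \<lfloor>2*b\<rfloor> + r" unfolding r_def frac_def by simp
  have "real K * r = real K * (e - max 0 (e - r)) + real K * (1 - min 1 (e + 1 - r))"
    using len by (metis distrib_left)
  then have "2*b*real K = real K * of_int \<lfloor>2*b\<rfloor> + real K * (e - max 0 (e - r)) + real K * (1 - min 1 (e + 1 - r))"
  proof -
    define F where "F = (of_int \<lfloor>2*b\<rfloor> :: real)"
    have "2*b*real K = (F + r) * real K" using tb F_def by simp
    also have "\<dots> = real K * F + real K * r" by (simp add: algebra_simps)
    finally show ?thesis using \<open>real K * r = _\<close> unfolding F_def by linarith
  qed
  then show ?thesis using sum2 d1 d2 by linarith
qed



lemma cnt_mono: "b \<le> b' \<Longrightarrow> cnt t b \<le> cnt t b'"
  unfolding cnt_def by (rule card_mono) (auto simp: cnt_set intro: ceiling_mono floor_mono)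

lemma cnt_le: "b \<ge> 0 \<Longrightarrow> real (cnt t b) \<le> 2*b + 1"
proof -
  assume "b \<ge> 0"
  moreover have fl: "real_of_int \<lfloor>2*b\<rfloor> \<le> 2*b" by (rule of_int_floor_le)
  ultimately have "real (cnt t b) \<le> real_of_int \<lfloor>2*b\<rfloor> + 1" using cnt_formula[of b t] by (auto split: if_splits)
  then show ?thesis using fl by linarith
qed

lemma sum_split_nat: "K \<le> K' \<Longrightarrow> (\<Sum>n\<in>{1..K'}. h n) = (\<Sum>n\<in>{1..K}. h n) + (\<Sum>n\<in>{Suc K..K'}. h n)"
  for h :: "nat \<Rightarrow> real"
proof -
  assume "K \<le> K'"
  then have "{1..K'} = {1..K} \<union> {Suc K..K'}" by auto
  moreover have "{1..K} \<inter> {Suc K..K'} = {}" by auto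
  ultimately show ?thesis by (simp add: sum.union_disjoint)
qed

locale gsetting =
  fixes x :: "nat \<Rightarrow> real" and g :: "real \<Rightarrow> real"
  assumes g_pos: "\<And>t. t \<ge> 1 \<Longrightarrow> g t > 0"
    and g_decr: "\<And>t u. 1 \<le> t \<Longrightarrow> t \<le> u \<Longrightarrow> g u \<le> g t"
begin

definition ee :: "nat \<Rightarrow> real" where "ee K = 2 * real K * discrepancy x K"

definition ff :: "nat \<Rightarrow> real \<Rightarrow> real" where
  "ff n w = real (cnt (x n - w) (g (real n))) / (2 * g (real n))"

lemma ee_nonneg: "ee K \<ge> 0" unfolding ee_def using disc_nonneg[of x K] by simp

lemma block_cnt:
  assumes "b \<ge> 0" "K \<le> K'"
  shows "\<bar>(\<Sum>n\<in>{Suc K..K'}. real (cnt (x n - w) b)) - 2*b*(real K' - real K)\<bar> \<le> ee K + ee K'"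
  using S_bound[OF assms(1), of x w K] S_bound[OF assms(1), of x w K']
    sum_split_nat[OF assms(2), of "\<lambda>n. real (cnt (x n - w) b)"]
  unfolding ee_def by (simp add: algebra_simps abs_le_iff)

lemma block_upper:
  assumes "1 \<le> K" "K \<le> K'"
  shows "(\<Sum>n\<in>{Suc K..K'}. ff n w) \<le> (g K / g K') * (real K' - real K) + (ee K + ee K') / (2 * g K')"
proof -
  have gK': "g K' > 0" using g_pos assms by auto
  have gK: "g K > 0" using g_pos assms by auto
  have "(\<Sum>n\<in>{Suc K..K'}. ff n w) \<le> (\<Sum>n\<in>{Suc K..K'}. real (cnt (x n - w) (g K)) / (2 * g K'))"
  proof (rule sum_mono)
    fix n assume n: "n \<in> {Suc K..K'}"
    have gn: "g K' \<le> g n" "g n \<le> g K" using n assms by (auto intro!: g_decr)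
    have gnp: "g n > 0" using n assms g_pos by auto
    have "real (cnt (x n - w) (g n)) \<le> real (cnt (x n - w) (g K))" using cnt_mono[OF gn(2)] by simp
    then show "ff n w \<le> real (cnt (x n - w) (g K)) / (2 * g K')"
      unfolding ff_def using gn gnp gK' by (intro frac_le) auto
  qed
  also have "\<dots> = (\<Sum>n\<in>{Suc K..K'}. real (cnt (x n - w) (g K))) / (2 * g K')"
    by (simp add: sum_divide_distrib)
  also have "\<dots> \<le> (2 * g K * (real K' - real K) + (ee K + ee K')) / (2 * g K')"
    using block_cnt[of "g K" K K' w] gK assms gK' by (intro divide_right_mono) auto
  also have "\<dots> = (g K / g K') * (real K' - real K) + (ee K + ee K') / (2 * g K')"
    using gK' by (simp add: field_simps)
  finally show ?thesis .
qed

lemma block_lower: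
  assumes "1 \<le> K" "K \<le> K'"
  shows "(\<Sum>n\<in>{Suc K..K'}. ff n w) \<ge> (g K' / g K) * (real K' - real K) - (ee K + ee K') / (2 * g K)"
proof -
  have gK': "g K' > 0" using g_pos assms by auto
  have gK: "g K > 0" using g_pos assms by auto
  have "(g K' / g K) * (real K' - real K) - (ee K + ee K') / (2 * g K)
      = (2 * g K' * (real K' - real K) - (ee K + ee K')) / (2 * g K)"
    using gK by (simp add: field_simps)
  also have "\<dots> \<le> (\<Sum>n\<in>{Suc K..K'}. real (cnt (x n - w) (g K'))) / (2 * g K)"
    using block_cnt[of "g K'" K K' w] gK assms gK' by (intro divide_right_mono) auto
  also have "\<dots> = (\<Sum>n\<in>{Suc K..K'}. real (cnt (x n - w) (g K')) / (2 * g K))"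
    by (simp add: sum_divide_distrib)
  also have "\<dots> \<le> (\<Sum>n\<in>{Suc K..K'}. ff n w)"
  proof (rule sum_mono)
    fix n assume n: "n \<in> {Suc K..K'}"
    have gn: "g K' \<le> g n" "g n \<le> g K" using n assms by (auto intro!: g_decr)
    have gnp: "g n > 0" using n assms g_pos by auto
    have "real (cnt (x n - w) (g K')) \<le> real (cnt (x n - w) (g n))" using cnt_mono[OF gn(1)] by simp
    then show "real (cnt (x n - w) (g K')) / (2 * g K) \<le> ff n w"
      unfolding ff_def using gn gnp gK' by (intro frac_le) auto
  qed
  finally show ?thesis .
qed

end


context gsetting begin

lemma block_err:
  assumes "1 \<le> K" "K \<le> K'" "0 \<le> \<epsilon>" "\<epsilon> \<le> 1" "g K \<le> (1 + \<epsilon>) * g K'"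
  shows "\<bar>(\<Sum>n\<in>{Suc K..K'}. ff n w) - (real K' - real K)\<bar>
           \<le> \<epsilon> * (real K' - real K) + (1 + \<epsilon>) * (ee K / (2 * g K)) + ee K' / (2 * g K')"
proof -
  have gK': "g K' > 0" using g_pos assms by auto
  have gK: "g K > 0" using g_pos assms by auto
  have gKK: "g K' \<le> g K" using assms by (intro g_decr) auto
  have len: "real K' - real K \<ge> 0" using assms by simp
  have e1: "ee K \<ge> 0" "ee K' \<ge> 0" by (rule ee_nonneg)+
  have r1: "g K / g K' \<le> 1 + \<epsilon>" using assms gK' by (simp add: divide_le_eq)
  have r2: "g K' / g K \<ge> 1 - \<epsilon>"
  proof -
    have "(1 - \<epsilon>) * g K \<le> (1 - \<epsilon>) * ((1 + \<epsilon>) * g K')"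
      using assms by (intro mult_left_mono) auto
    also have "\<dots> = (1 - \<epsilon>*\<epsilon>) * g K'" by (simp add: algebra_simps)
    also have "\<dots> \<le> g K'" using gK' assms by (simp add: mult_le_cancel_right1)
    finally show ?thesis using gK by (simp add: le_divide_eq)
  qed
  have a1: "ee K / (2 * g K') \<le> (1 + \<epsilon>) * (ee K / (2 * g K))"
  proof -
    have "ee K / (2 * g K') = (ee K / (2 * g K)) * (g K / g K')" using gK gK' by simp
    also have "\<dots> \<le> (ee K / (2 * g K)) * (1 + \<epsilon>)"
      using r1 e1 gK by (intro mult_left_mono) auto
    finally show ?thesis by (simp add: mult.commute)
  qed
  have a2: "ee K' / (2 * g K) \<le> ee K' / (2 * g K')"
    using gKK gK' e1 by (intro divide_left_mono) auto
  have a3: "ee K / (2 * g K) \<le> (1 + \<epsilon>) * (ee K / (2 * g K))"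
  proof -
    define q where "q = ee K / (2 * g K)"
    have "q \<ge> 0" unfolding q_def using e1 gK by simp
    then have "\<epsilon> * q \<ge> 0" using assms by simp
    then have "q \<le> (1 + \<epsilon>) * q" by (simp add: distrib_right)
    then show ?thesis unfolding q_def .
  qed
  have up: "(\<Sum>n\<in>{Suc K..K'}. ff n w) \<le> (1 + \<epsilon>) * (real K' - real K) + (1 + \<epsilon>) * (ee K / (2 * g K)) + ee K' / (2 * g K')"
  proof -
    have "(g K / g K') * (real K' - real K) \<le> (1 + \<epsilon>) * (real K' - real K)"
      using r1 len by (intro mult_right_mono) auto
    then show ?thesis using block_upper[OF assms(1,2), of w] a1 by (simp add: add_divide_distrib)
  qed
  have lo: "(\<Sum>n\<in>{Suc K..K'}. ff n w) \<ge> (1 - \<epsilon>) * (real K' - real K) - (1 + \<epsilon>) * (ee K / (2 * g K)) - ee K' / (2 * g K')"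
  proof -
    have "(g K' / g K) * (real K' - real K) \<ge> (1 - \<epsilon>) * (real K' - real K)"
      using r2 len by (intro mult_right_mono) auto
    then show ?thesis using block_lower[OF assms(1,2), of w] a2 a3 by (simp add: add_divide_distrib)
  qed
  show ?thesis using up lo by (simp add: abs_le_iff algebra_simps)
qed

end


lemma sum_split2: "K0 \<le> K \<Longrightarrow> K \<le> K' \<Longrightarrow> (\<Sum>n\<in>{Suc K0..K'}. h n) = (\<Sum>n\<in>{Suc K0..K}. h n) + (\<Sum>n\<in>{Suc K..K'}. h n)"
  for h :: "nat \<Rightarrow> real"
proof -
  assume "K0 \<le> K" "K \<le> K'"
  then have "{Suc K0..K'} = {Suc K0..K} \<union> {Suc K..K'}" by auto
  moreover have "{Suc K0..K} \<inter> {Suc K..K'} = {}" by auto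
  ultimately show ?thesis by (simp add: sum.union_disjoint)
qed

context gsetting begin

definition hh :: "nat \<Rightarrow> real" where "hh K = ee K / (2 * g K)"

lemma hh_nonneg: "K \<ge> 1 \<Longrightarrow> hh K \<ge> 0"
  unfolding hh_def using ee_nonneg[of K] g_pos[of K] by simp

lemma chain_total:
  assumes eps: "0 < \<epsilon>" "\<epsilon> \<le> 1" and K0: "K0 \<ge> 1"
    and E: "\<And>K. K \<ge> K0 \<Longrightarrow> K < E K \<and> g K \<le> (1+\<epsilon>) * g (E K)
              \<and> hh K \<le> \<epsilon> * (real (E K) - real K) / 2 \<and> hh K \<le> \<epsilon> * real K / 2"
    and N: "N \<ge> K0"
  shows "\<bar>(\<Sum>n\<in>{Suc K0..N}. ff n w) - (real N - real K0)\<bar> \<le> 6 * \<epsilon> * real N"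
proof -
  define k where "k j = (E ^^ j) K0" for j
  have k0: "k 0 = K0" and kS: "\<And>j. k (Suc j) = E (k j)" unfolding k_def by simp_all
  have kge: "k j \<ge> K0 + j" for j
  proof (induction j)
    case 0 then show ?case by (simp add: k0)
  next
    case (Suc j)
    then have "k j \<ge> K0" by simp
    then have "k j < k (Suc j)" using E kS by auto
    then show ?case using Suc by simp
  qed
  have kK0: "k j \<ge> K0" for j using kge[of j] by simp
  have inv: "\<bar>(\<Sum>n\<in>{Suc K0..k j}. ff n w) - (real (k j) - real K0)\<bar>
             \<le> 3 * \<epsilon> * (real (k j) - real K0) + hh (k j)" for j
  proof (induction j)
    case 0 then show ?case using hh_nonneg[of K0] K0 by (simp add: k0)
  next
    case (Suc j)
    define K where "K = k j"
    define K' where "K' = k (Suc j)"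
    have KK0: "K \<ge> K0" unfolding K_def by (rule kK0)
    have EK: "K < K'" "g K \<le> (1+\<epsilon>) * g K'" "hh K \<le> \<epsilon> * (real K' - real K) / 2"
      using E[OF KK0] unfolding K'_def kS K_def by auto
    have split: "(\<Sum>n\<in>{Suc K0..K'}. ff n w) = (\<Sum>n\<in>{Suc K0..K}. ff n w) + (\<Sum>n\<in>{Suc K..K'}. ff n w)"
      using KK0 EK by (intro sum_split2) auto
    have be: "\<bar>(\<Sum>n\<in>{Suc K..K'}. ff n w) - (real K' - real K)\<bar>
           \<le> \<epsilon> * (real K' - real K) + (1 + \<epsilon>) * hh K + hh K'"
      using block_err[of K K' \<epsilon> w] KK0 K0 EK eps unfolding hh_def by auto
    have IH: "\<bar>(\<Sum>n\<in>{Suc K0..K}. ff n w) - (real K - real K0)\<bar> \<le> 3 * \<epsilon> * (real K - real K0) + hh K"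
      using Suc unfolding K_def .
    have hK: "hh K \<ge> 0" using hh_nonneg[of K] KK0 K0 by simp
    have "(2 + \<epsilon>) * hh K \<le> (2 + \<epsilon>) * (\<epsilon> * (real K' - real K) / 2)"
      using EK(3) eps by (intro mult_left_mono) auto
    also have "\<dots> \<le> 3 * (\<epsilon> * (real K' - real K) / 2)"
      using eps EK(1) by (intro mult_right_mono) auto
    finally have t: "(2 + \<epsilon>) * hh K \<le> 3 * (\<epsilon> * (real K' - real K) / 2)" .
    define A where "A = \<epsilon> * (real K' - real K)"
    define B where "B = \<epsilon> * (real K - real K0)"
    have e1: "3 * \<epsilon> * (real K' - real K0) = 3 * B + 3 * A"
      unfolding A_def B_def by (simp add: algebra_simps)
    have e2: "3 * \<epsilon> * (real K - real K0) = 3 * B" unfolding B_def by simp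
    have A0: "A \<ge> 0" unfolding A_def using eps EK(1) by simp
    have e3: "(1 + \<epsilon>) * hh K + hh K = (2 + \<epsilon>) * hh K" by (simp add: algebra_simps)
    have t': "(2 + \<epsilon>) * hh K \<le> 3 * A / 2" using t unfolding A_def by simp
    have be': "\<bar>(\<Sum>n\<in>{Suc K..K'}. ff n w) - (real K' - real K)\<bar> \<le> A + (1 + \<epsilon>) * hh K + hh K'"
      using be unfolding A_def .
    have IH': "\<bar>(\<Sum>n\<in>{Suc K0..K}. ff n w) - (real K - real K0)\<bar> \<le> 3 * B + hh K"
      using IH e2 by simp
    have "\<bar>(\<Sum>n\<in>{Suc K0..K'}. ff n w) - (real K' - real K0)\<bar> \<le> 3 * B + 3 * A + hh K'"
      using split be' IH' t' e3 A0 by (unfold abs_le_iff, elim conjE, intro conjI; linarith)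
    then show ?case using e1 unfolding K'_def by simp
  qed
  have "\<exists>j. N < k j" using kge[of "Suc N"] by (intro exI[of _ "Suc N"]) simp
  define j' where "j' = (LEAST j. N < k j)"
  have j'1: "N < k j'" unfolding j'_def by (rule LeastI_ex) fact
  have j'0: "j' \<noteq> 0"
  proof
    assume "j' = 0"
    then show False using j'1 N k0 by simp
  qed
  then obtain j where jj: "j' = Suc j" by (cases j') auto
  have kjN: "k j \<le> N" using not_less_Least[of j "\<lambda>j. N < k j"] unfolding j'_def[symmetric] jj by auto
  have NE: "N < E (k j)" using j'1 jj kS by simp
  define K where "K = k j"
  have KK0: "K \<ge> K0" unfolding K_def by (rule kK0)
  have EK: "g K \<le> (1+\<epsilon>) * g (E K)" "hh K \<le> \<epsilon> * real K / 2" using E[OF KK0] by auto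
  have gN: "g (E K) \<le> g N" using NE K0 N unfolding K_def by (intro g_decr) auto
  have gK1: "g K \<le> (1+\<epsilon>) * g N" using EK(1) gN eps by (smt (verit) mult_left_mono)
  have split: "(\<Sum>n\<in>{Suc K0..N}. ff n w) = (\<Sum>n\<in>{Suc K0..K}. ff n w) + (\<Sum>n\<in>{Suc K..N}. ff n w)"
    using KK0 kjN unfolding K_def by (intro sum_split2) auto
  have be: "\<bar>(\<Sum>n\<in>{Suc K..N}. ff n w) - (real N - real K)\<bar>
         \<le> \<epsilon> * (real N - real K) + (1 + \<epsilon>) * hh K + hh N"
    using block_err[of K N \<epsilon> w] KK0 K0 kjN gK1 eps unfolding hh_def K_def by auto
  have IH: "\<bar>(\<Sum>n\<in>{Suc K0..K}. ff n w) - (real K - real K0)\<bar> \<le> 3 * \<epsilon> * (real K - real K0) + hh K"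
    using inv[of j] unfolding K_def .
  have hN: "hh N \<le> \<epsilon> * real N / 2" using E[OF N] by auto
  have KN: "real K \<le> real N" using kjN unfolding K_def by simp
  have "(2 + \<epsilon>) * hh K \<le> (2 + \<epsilon>) * (\<epsilon> * real K / 2)"
    using EK(2) eps by (intro mult_left_mono) auto
  also have "\<dots> \<le> 3 * (\<epsilon> * real N / 2)"
    using eps KN by (intro mult_mono) auto
  finally have t: "(2 + \<epsilon>) * hh K \<le> 3 * (\<epsilon> * real N / 2)" .
  define A where "A = \<epsilon> * (real N - real K)"
  define B where "B = \<epsilon> * (real K - real K0)"
  define C where "C = \<epsilon> * real N"
  have t2: "3 * B + A \<le> 3 * C"
  proof -
    have "\<epsilon> * (2*real K) \<le> \<epsilon>*(3 * real K0 + 2 * real N)" using eps KN by (intro mult_left_mono) auto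
    then show ?thesis unfolding A_def B_def C_def by (simp add: algebra_simps)
  qed
  have e3: "(1 + \<epsilon>) * hh K + hh K = (2 + \<epsilon>) * hh K" by (simp add: algebra_simps)
  have t': "(2 + \<epsilon>) * hh K \<le> 3 * C / 2" using t unfolding C_def by simp
  have hN': "hh N \<le> C / 2" using hN unfolding C_def by simp
  have be': "\<bar>(\<Sum>n\<in>{Suc K..N}. ff n w) - (real N - real K)\<bar> \<le> A + (1 + \<epsilon>) * hh K + hh N"
    using be unfolding A_def .
  have IH': "\<bar>(\<Sum>n\<in>{Suc K0..K}. ff n w) - (real K - real K0)\<bar> \<le> 3 * B + hh K"
    using IH unfolding B_def by simp
  have "\<bar>(\<Sum>n\<in>{Suc K0..N}. ff n w) - (real N - real K0)\<bar> \<le> 6 * C"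
  proof -
    define S1 where "S1 = (\<Sum>n\<in>{Suc K0..K}. ff n w)"
    define S2 where "S2 = (\<Sum>n\<in>{Suc K..N}. ff n w)"
    define H where "H = (1 + \<epsilon>) * hh K"
    have C0: "C \<ge> 0" unfolding C_def using eps by simp
    have b1: "\<bar>S2 - (real N - real K)\<bar> \<le> A + H + hh N" using be' unfolding S2_def H_def .
    have b2: "\<bar>S1 - (real K - real K0)\<bar> \<le> 3 * B + hh K" using IH' unfolding S1_def .
    have b3: "H + hh K \<le> 3 * C / 2" using t' e3 unfolding H_def by linarith
    have "\<bar>(S1 + S2) - (real N - real K0)\<bar> \<le> 3 * B + A + (H + hh K) + hh N"
      using b1 b2 by linarith
    also have "\<dots> \<le> 6 * C" using b3 t2 hN' C0 by linarith
    finally show ?thesis using split unfolding S1_def S2_def by simp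
  qed
  then show ?thesis unfolding C_def by simp
qed

end


lemma maxdisc_ge: "1 \<le> n \<Longrightarrow> n \<le> K \<Longrightarrow> real n * discrepancy x n \<le> maxdisc x K"
  unfolding maxdisc_def by (rule Max_ge) (auto simp: setcompr_eq_image)

lemma maxdisc_mono: "1 \<le> K \<Longrightarrow> K \<le> K' \<Longrightarrow> maxdisc x K \<le> maxdisc x K'"
  unfolding maxdisc_def by (rule Max_mono) (auto simp: setcompr_eq_image)

lemma maxdisc_ge1: "1 \<le> K \<Longrightarrow> maxdisc x K \<ge> 1"
  using maxdisc_ge[of 1 K x] disc_one[of x] by simp

locale gsetting2 = gsetting +
  assumes g_disc: "filterlim (\<lambda>N. g (real N) / discrepancy x N) at_top sequentially"
    and g_ratio: "(\<lambda>N. g (real N * (1 + maxdisc x N / (real N * g (real N)))) / g (real N))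
                    \<longlonglongrightarrow> 1"
begin

definition LL :: "nat \<Rightarrow> real" where "LL K = maxdisc x K / g K"
definition ll :: "nat \<Rightarrow> real" where "ll K = max 0 (LL K - 1)"

lemma LL_mono: "1 \<le> K \<Longrightarrow> K \<le> K' \<Longrightarrow> LL K \<le> LL K'"
proof -
  assume a: "1 \<le> K" "K \<le> K'"
  have gK: "g K > 0" "g K' > 0" using a g_pos by auto
  have gg: "g K' \<le> g K" using a by (intro g_decr) auto
  have m: "maxdisc x K \<le> maxdisc x K'" "maxdisc x K \<ge> 1" using maxdisc_mono[OF a] maxdisc_ge1 a by auto
  have "maxdisc x K / g K \<le> maxdisc x K / g K'" using gK gg m by (intro divide_left_mono) auto
  also have "\<dots> \<le> maxdisc x K' / g K'" using gK m by (intro divide_right_mono) auto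
  finally show ?thesis unfolding LL_def .
qed

lemma LL_pos: "1 \<le> K \<Longrightarrow> LL K \<ge> 0"
  unfolding LL_def using maxdisc_ge1[of K x] g_pos[of K] by simp

lemma ratio1: "(\<lambda>N. g (real N + LL N) / g (real N)) \<longlonglongrightarrow> 1"
proof -
  have "eventually (\<lambda>N. g (real N * (1 + maxdisc x N / (real N * g (real N)))) / g (real N)
          = g (real N + LL N) / g (real N)) sequentially"
    using eventually_ge_at_top[of "1::nat"]
  proof eventually_elim
    case (elim N)
    then have "g N > 0" using g_pos by auto
    then have "real N * (1 + maxdisc x N / (real N * g (real N))) = real N + LL N"
      using elim unfolding LL_def by (simp add: field_simps)
    then show ?case by simp
  qed
  from tendsto_cong[OF this] g_ratio show ?thesis by simp
qed

lemma chain_ratio: "(\<lambda>K. g (real K + real r * ll K) / g (real K)) \<longlonglongrightarrow> 1"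
proof (induction r)
  case 0
  have "eventually (\<lambda>K. g (real K + real 0 * ll K) / g (real K) = 1) sequentially"
    using eventually_ge_at_top[of "1::nat"]
  proof eventually_elim
    case (elim K)
    then have "g K > 0" using g_pos by simp
    then show ?case by simp
  qed
  then show ?case by (simp add: tendsto_eventually)
next
  case (Suc r)
  define K' where "K' K = nat \<lfloor>real K + real r * ll K\<rfloor>" for K
  have ll0: "ll K \<ge> 0" for K unfolding ll_def by simp
  have K'ge: "K' K \<ge> K" for K
    unfolding K'_def using ll0[of K] by (simp add: le_nat_iff le_floor_iff)
  have K'le: "real (K' K) \<le> real K + real r * ll K" for K
    unfolding K'_def using ll0[of K] by simp
  have K'gt: "real (K' K) > real K + real r * ll K - 1" for K
    unfolding K'_def using ll0[of K] by linarith
  have lim': "filterlim K' sequentially sequentially"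
    by (rule filterlim_at_top_mono[OF filterlim_ident]) (use K'ge in auto)
  have A: "(\<lambda>K. g (real (K' K) + LL (K' K)) / g (real (K' K))) \<longlonglongrightarrow> 1"
    using filterlim_compose[OF ratio1 lim'] by (simp add: o_def)
  have pos: "\<And>t. t \<ge> 1 \<Longrightarrow> g t > 0" by (rule g_pos)
  have fA: "(\<lambda>K. g (real K + real (Suc r) * ll K) / g (real (K' K))) \<longlonglongrightarrow> 1"
  proof (rule real_tendsto_sandwich[OF _ _ A tendsto_const])
    show "eventually (\<lambda>K. g (real (K' K) + LL (K' K)) / g (real (K' K))
            \<le> g (real K + real (Suc r) * ll K) / g (real (K' K))) sequentially"
      using eventually_ge_at_top[of "1::nat"]
    proof eventually_elim
      case (elim K)
      have K'1: "K' K \<ge> 1" using K'ge[of K] elim by simp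
      have LLm: "LL K \<le> LL (K' K)" using LL_mono[OF elim K'ge] .
      have "real K + real (Suc r) * ll K \<le> real (K' K) + LL (K' K)"
      proof (cases "LL K \<ge> 1")
        case True
        then have "ll K = LL K - 1" unfolding ll_def by simp
        then show ?thesis using K'gt[of K] LLm by (simp add: algebra_simps)
      next
        case False
        then have "ll K = 0" unfolding ll_def by simp
        then show ?thesis using K'ge[of K] LL_pos[OF K'1] by simp
      qed
      moreover have "real K + real (Suc r) * ll K \<ge> 1"
      proof -
        have "real (Suc r) * ll K \<ge> 0" using ll0[of K] by simp
        then show ?thesis using elim by linarith
      qed
      ultimately have "g (real (K' K) + LL (K' K)) \<le> g (real K + real (Suc r) * ll K)"
        by (intro g_decr) auto
      then show ?case using pos[of "real (K' K)"] K'1 by (intro divide_right_mono) auto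
    qed
    show "eventually (\<lambda>K. g (real K + real (Suc r) * ll K) / g (real (K' K)) \<le> 1) sequentially"
      using eventually_ge_at_top[of "1::nat"]
    proof eventually_elim
      case (elim K)
      have K'1: "K' K \<ge> 1" using K'ge[of K] elim by simp
      have "real (K' K) \<le> real K + real (Suc r) * ll K" using K'le[of K] ll0[of K] by (simp add: algebra_simps)
      then have "g (real K + real (Suc r) * ll K) \<le> g (real (K' K))" using K'1 by (intro g_decr) auto
      then show ?case using pos[of "real (K' K)"] K'1 by simp
    qed
  qed
  have fB: "(\<lambda>K. g (real (K' K)) / g (real K)) \<longlonglongrightarrow> 1"
  proof (rule real_tendsto_sandwich[OF _ _ Suc.IH tendsto_const])
    show "eventually (\<lambda>K. g (real K + real r * ll K) / g (real K) \<le> g (real (K' K)) / g (real K)) sequentially"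
      using eventually_ge_at_top[of "1::nat"]
    proof eventually_elim
      case (elim K)
      have K'1: "K' K \<ge> 1" using K'ge[of K] elim by simp
      have "g (real K + real r * ll K) \<le> g (real (K' K))" using K'1 K'le[of K] by (intro g_decr) auto
      then show ?case using pos[of "real K"] elim by (intro divide_right_mono) auto
    qed
    show "eventually (\<lambda>K. g (real (K' K)) / g (real K) \<le> 1) sequentially"
      using eventually_ge_at_top[of "1::nat"]
    proof eventually_elim
      case (elim K)
      have "g (real (K' K)) \<le> g (real K)" using elim K'ge[of K] by (intro g_decr) auto
      then show ?case using pos[of "real K"] elim by simp
    qed
  qed
  have lim: "(\<lambda>K. g (real K + real (Suc r) * ll K) / g (real (K' K)) * (g (real (K' K)) / g (real K))) \<longlonglongrightarrow> 1"
    using tendsto_mult[OF fA fB] by (simp only: mult_1)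
  have ev: "eventually (\<lambda>K. g (real K + real (Suc r) * ll K) / g (real (K' K)) * (g (real (K' K)) / g (real K))
      = g (real K + real (Suc r) * ll K) / g (real K)) sequentially"
    using eventually_ge_at_top[of "1::nat"]
  proof eventually_elim
    case (elim K)
    have K'1: "K' K \<ge> 1" using K'ge[of K] elim by simp
    then show ?case using pos[of "real (K' K)"] by simp
  qed
  show ?case by (rule tendsto_cong[THEN iffD1, OF ev lim])
qed

end


context gsetting2 begin

definition EE :: "real \<Rightarrow> nat \<Rightarrow> nat" where
  "EE \<epsilon> K = K + nat \<lceil>2 * hh K / \<epsilon>\<rceil> + 1"

lemma hh_le_LL: "K \<ge> 1 \<Longrightarrow> hh K \<le> LL K"
proof -
  assume K: "K \<ge> 1"
  have "hh K = real K * discrepancy x K / g K" unfolding hh_def ee_def by simp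
  also have "\<dots> \<le> maxdisc x K / g K" using maxdisc_ge[of K K x] K g_pos[of K]
    by (intro divide_right_mono) auto
  finally show ?thesis unfolding LL_def .
qed

lemma ev_hh: assumes "\<epsilon> > 0" shows "eventually (\<lambda>K. hh K \<le> \<epsilon> * real K / 2) sequentially"
proof -
  have "eventually (\<lambda>K. 2 / \<epsilon> \<le> g (real K) / discrepancy x K) sequentially"
    using g_disc by (simp add: filterlim_at_top)
  then show ?thesis using eventually_ge_at_top[of "1::nat"]
  proof eventually_elim
    case (elim K)
    have gK: "g K > 0" using g_pos elim by simp
    have D0: "discrepancy x K \<ge> 0" by (rule disc_nonneg)
    have "discrepancy x K \<noteq> 0" using elim assms by auto
    then have Dp: "discrepancy x K > 0" using D0 by simp
    have "2 / \<epsilon> * discrepancy x K \<le> g K" using elim Dp by (simp add: le_divide_eq)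
    then have "discrepancy x K \<le> \<epsilon> * g K / 2" using assms by (simp add: field_simps)
    then have "real K * discrepancy x K \<le> real K * (\<epsilon> * g K / 2)" by (intro mult_left_mono) auto
    then have "real K * discrepancy x K / g K \<le> \<epsilon> * real K / 2" using gK by (simp add: divide_le_eq field_simps)
    then show ?case unfolding hh_def ee_def by simp
  qed
qed

lemma ev_ratio: assumes "\<epsilon> > 0" shows "eventually (\<lambda>K. g K \<le> (1+\<epsilon>) * g (EE \<epsilon> K)) sequentially"
proof (cases "\<exists>c>0. \<forall>n\<ge>1. c \<le> g (real n)")
  case True
  then obtain c where c: "c > 0" "\<And>n. n \<ge> 1 \<Longrightarrow> c \<le> g (real n)" by blast
  define X where "X = (\<lambda>n. g (real n)) ` {1..}"
  have Xne: "X \<noteq> {}" unfolding X_def by auto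
  have Xb: "bdd_below X" unfolding X_def bdd_below_def using c by auto
  define cs where "cs = Inf X"
  have csc: "c \<le> cs" unfolding cs_def using c by (intro cInf_greatest[OF Xne]) (auto simp: X_def)
  have csl: "cs \<le> g (real n)" if "n \<ge> 1" for n
    unfolding cs_def using that by (intro cInf_lower[OF _ Xb]) (auto simp: X_def)
  have "cs < (1 + \<epsilon>) * cs" using csc c assms by simp
  then obtain v where v: "v \<in> X" "v < (1 + \<epsilon>) * cs"
    using cInf_less_iff[OF Xne Xb] unfolding cs_def by auto
  then obtain n0 :: nat where n0: "n0 \<ge> 1" "g (real n0) < (1+\<epsilon>) * cs" unfolding X_def by auto
  show ?thesis using eventually_ge_at_top[of n0]
  proof eventually_elim
    case (elim K)
    have "g K \<le> g n0" using elim n0 by (intro g_decr) auto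
    also have "\<dots> \<le> (1+\<epsilon>) * cs" using n0 by simp
    also have "\<dots> \<le> (1+\<epsilon>) * g (EE \<epsilon> K)"
      using csl[of "EE \<epsilon> K"] assms by (intro mult_left_mono) (auto simp: EE_def)
    finally show ?case .
  qed
next
  case False
  then obtain n1 where n1: "n1 \<ge> 1" "g (real n1) < 1/2"
    by (metis less_eq_real_def not_le zero_less_divide_1_iff zero_less_numeral)
  define r :: nat where "r = nat \<lceil>4 / \<epsilon>\<rceil> + 4"
  have r: "real r \<ge> 4 / \<epsilon> + 4" unfolding r_def by linarith
  have "1 / (1 + \<epsilon>) < 1" using assms by simp
  from order_tendstoD(1)[OF chain_ratio[of r] this]
  have ev1: "eventually (\<lambda>K. 1 / (1 + \<epsilon>) < g (real K + real r * ll K) / g (real K)) sequentially" .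
  show ?thesis using ev1 eventually_ge_at_top[of n1]
  proof eventually_elim
    case (elim K)
    have K1: "K \<ge> 1" using elim n1 by simp
    have gK: "g K > 0" using g_pos K1 by simp
    have gK2: "g K < 1/2" using g_decr[of n1 K] n1 elim by simp
    have LL2: "LL K \<ge> 2"
    proof -
      have "maxdisc x K \<ge> 1" using maxdisc_ge1 K1 by simp
      then have "maxdisc x K / g K \<ge> 1 / g K" using gK by (intro divide_right_mono) auto
      moreover have "1 / g K \<ge> 2" using gK gK2 by (simp add: le_divide_eq)
      ultimately show ?thesis unfolding LL_def by simp
    qed
    have llK: "ll K = LL K - 1" unfolding ll_def using LL2 by simp
    have hh0: "hh K \<ge> 0" using hh_nonneg K1 by simp
    have "real (EE \<epsilon> K) - real K = real (nat \<lceil>2 * hh K / \<epsilon>\<rceil>) + 1" unfolding EE_def by simp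
    also have "\<dots> \<le> 2 * hh K / \<epsilon> + 2"
      using hh0 assms by (simp add: of_nat_nat) linarith
    also have "\<dots> \<le> 2 * LL K / \<epsilon> + 2"
      using hh_le_LL[OF K1] assms by (simp add: divide_right_mono)
    also have "\<dots> \<le> real r * ll K"
    proof -
      have "(4 / \<epsilon> + 4) * (LL K / 2) \<le> real r * (LL K / 2)"
        using r LL2 by (intro mult_right_mono) auto
      also have "\<dots> \<le> real r * ll K" using llK LL2 by (intro mult_left_mono) auto
      finally have "(4 / \<epsilon> + 4) * (LL K / 2) \<le> real r * ll K" .
      moreover have "(4 / \<epsilon> + 4) * (LL K / 2) = 2 * LL K / \<epsilon> + 2 * LL K"
        using assms by (simp add: field_simps)
      ultimately show ?thesis using LL2 by linarith
    qed
    finally have Ele: "real (EE \<epsilon> K) \<le> real K + real r * ll K" by simp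
    have "g (real K + real r * ll K) \<le> g (EE \<epsilon> K)"
      using Ele by (intro g_decr) (auto simp: EE_def)
    moreover have "g K / (1 + \<epsilon>) < g (real K + real r * ll K)"
      using elim(1) gK assms by (simp add: field_simps)
    ultimately have "g K / (1 + \<epsilon>) \<le> g (EE \<epsilon> K)" by simp
    then show ?case using assms by (simp add: field_simps)
  qed
qed

lemma core_K0:
  assumes "0 < \<epsilon>" "\<epsilon> \<le> 1"
  shows "\<exists>K0\<ge>1. \<forall>K\<ge>K0. K < EE \<epsilon> K \<and> g K \<le> (1+\<epsilon>) * g (EE \<epsilon> K)
              \<and> hh K \<le> \<epsilon> * (real (EE \<epsilon> K) - real K) / 2 \<and> hh K \<le> \<epsilon> * real K / 2"
proof -
  have "eventually (\<lambda>K. K \<ge> 1 \<and> g K \<le> (1+\<epsilon>) * g (EE \<epsilon> K) \<and> hh K \<le> \<epsilon> * real K / 2) sequentially"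
    using eventually_ge_at_top[of "1::nat"] ev_ratio[OF assms(1)] ev_hh[OF assms(1)] by eventually_elim auto
  then obtain K1 where K1: "\<And>K. K \<ge> K1 \<Longrightarrow> K \<ge> 1 \<and> g K \<le> (1+\<epsilon>) * g (EE \<epsilon> K) \<and> hh K \<le> \<epsilon> * real K / 2"
    unfolding eventually_sequentially by blast
  show ?thesis
  proof (intro exI[of _ "max K1 1"] conjI allI impI)
    fix K assume K: "max K1 1 \<le> K"
    then show "K < EE \<epsilon> K" unfolding EE_def by simp
    show "g K \<le> (1+\<epsilon>) * g (EE \<epsilon> K)" "hh K \<le> \<epsilon> * real K / 2" using K1 K by auto
    have "2 * hh K / \<epsilon> \<le> real (nat \<lceil>2 * hh K / \<epsilon>\<rceil>)" by linarith
    then have "2 * hh K / \<epsilon> \<le> real (EE \<epsilon> K) - real K" unfolding EE_def by simp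
    then show "hh K \<le> \<epsilon> * (real (EE \<epsilon> K) - real K) / 2" using assms by (simp add: field_simps)
  qed simp
qed

end


context gsetting2 begin

lemma ff_bounds: "n \<ge> 1 \<Longrightarrow> 0 \<le> ff n w \<and> ff n w \<le> (2 * g n + 1) / (2 * g n)"
proof -
  assume n: "n \<ge> 1"
  have gn: "g n > 0" using g_pos n by simp
  have "real (cnt (x n - w) (g n)) \<le> 2 * g n + 1" using cnt_le gn by simp
  then show ?thesis unfolding ff_def using gn by (auto intro: divide_right_mono)
qed

lemma G_bound:
  assumes "0 < \<epsilon>" "\<epsilon> \<le> 1"
  shows "\<exists>N0. \<forall>N\<ge>N0. \<forall>w. \<bar>(\<Sum>n\<in>{1..N}. ff n w) - real N\<bar> \<le> 7 * \<epsilon> * real N"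
proof -
  obtain K0 where K0: "K0 \<ge> 1" and E: "\<And>K. K \<ge> K0 \<Longrightarrow> K < EE \<epsilon> K \<and> g K \<le> (1+\<epsilon>) * g (EE \<epsilon> K)
              \<and> hh K \<le> \<epsilon> * (real (EE \<epsilon> K) - real K) / 2 \<and> hh K \<le> \<epsilon> * real K / 2"
    using core_K0[OF assms] by blast
  define C0 where "C0 = (\<Sum>n\<in>{1..K0}. (2 * g n + 1) / (2 * g n))"
  define N0 where "N0 = max K0 (nat \<lceil>(C0 + real K0) / \<epsilon>\<rceil>)"
  show ?thesis
  proof (intro exI[of _ N0] allI impI)
    fix N w assume N: "N0 \<le> N"
    have NK0: "N \<ge> K0" using N unfolding N0_def by simp
    have "(C0 + real K0) / \<epsilon> \<le> real N" using N unfolding N0_def by linarith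
    then have CN: "C0 + real K0 \<le> \<epsilon> * real N" using assms by (simp add: divide_le_eq mult.commute)
    have ct: "\<bar>(\<Sum>n\<in>{Suc K0..N}. ff n w) - (real N - real K0)\<bar> \<le> 6 * \<epsilon> * real N"
      by (rule chain_total[OF assms K0 E NK0])
    have s1: "0 \<le> (\<Sum>n\<in>{1..K0}. ff n w)" using ff_bounds by (intro sum_nonneg) auto
    have s2: "(\<Sum>n\<in>{1..K0}. ff n w) \<le> C0" unfolding C0_def using ff_bounds by (intro sum_mono) auto
    have sp: "(\<Sum>n\<in>{1..N}. ff n w) = (\<Sum>n\<in>{1..K0}. ff n w) + (\<Sum>n\<in>{Suc K0..N}. ff n w)"
      by (rule sum_split_nat[OF NK0])
    have K0p: "real K0 \<ge> 0" by simp
    show "\<bar>(\<Sum>n\<in>{1..N}. ff n w) - real N\<bar> \<le> 7 * \<epsilon> * real N"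
      using ct s1 s2 sp CN K0p by (unfold abs_le_iff, elim conjE, intro conjI; linarith)
  qed
qed

end


lemma dist_int_lt: "dist_int v < d \<longleftrightarrow> (\<exists>k::int. \<bar>v - of_int k\<bar> < d)"
proof -
  have ne: "range (\<lambda>k::int. \<bar>v - of_int k\<bar>) \<noteq> {}" by simp
  have bd: "bdd_below (range (\<lambda>k::int. \<bar>v - of_int k\<bar>))" by (rule bdd_belowI[of _ 0]) auto
  show ?thesis unfolding dist_int_def using cInf_less_iff[OF ne bd] by auto
qed

lemma meas_Icc: "a \<le> b \<Longrightarrow> measure lborel {a..b::real} = b - a"
  by (simp add: measure_def)

lemma meas_Ioo: "a \<le> b \<Longrightarrow> measure lborel {a<..<b::real} = b - a"
  by (simp add: measure_def)

definition TT :: "real \<Rightarrow> real \<Rightarrow> real \<Rightarrow> int \<Rightarrow> real set" where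
  "TT t a d k = {u. \<bar>u\<bar> < d \<and> \<bar>t - u - of_int k\<bar> \<le> a}"

lemma TT_sets: "TT t a d k \<in> sets lborel"
  unfolding TT_def by measurable

lemma TT_fin: "emeasure lborel (TT t a d k) < \<infinity>"
proof -
  have "emeasure lborel (TT t a d k) \<le> emeasure lborel {-\<bar>d\<bar>..\<bar>d\<bar>}"
    by (rule emeasure_mono) (auto simp: TT_def)
  also have "\<dots> < \<infinity>" by simp
  finally show ?thesis .
qed

lemma translate_meas:
  "measure lborel ({-a..a} \<inter> {z. \<bar>t + z - of_int k\<bar> < d}) = measure lborel (TT t a d k)"
proof -
  define c where "c = t - of_int k"
  have "measure lborel (TT t a d k) = measure (distr lborel borel ((+) c)) (TT t a d k)"
    by (simp only: lborel_distr_plus)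
  also have "\<dots> = measure lborel ((+) c -` TT t a d k \<inter> space lborel)"
    by (rule measure_distr) (auto simp: TT_sets[simplified])
  also have "(+) c -` TT t a d k \<inter> space lborel = {-a..a} \<inter> {z. \<bar>t + z - of_int k\<bar> < d}"
    unfolding TT_def c_def by (auto simp: algebra_simps abs_minus_commute abs_le_iff)
  finally show ?thesis by simp
qed

lemma per_n:
  assumes a: "a > 0" and d: "0 < d" "d \<le> 1/2"
  shows "measure (uniform_measure lborel {-a..a}) {z. dist_int (xv + z - y) < d}
       = (\<integral>u. (\<Sum>k\<in>{-\<lceil>\<bar>xv - y\<bar> + a + 1\<rceil>..\<lceil>\<bar>xv - y\<bar> + a + 1\<rceil>}. indicator (TT (xv - y) a d k) u) \<partial>lborel) / (2*a)"
proof -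
  define t where "t = xv - y"
  define R where "R = \<lceil>\<bar>t\<bar> + a + 1\<rceil>"
  define F where "F = {-R..R}"
  define Sk where "Sk k = {-a..a} \<inter> {z. \<bar>t + z - of_int k\<bar> < d}" for k :: int
  define S where "S = {z. dist_int (xv + z - y) < d}"
  have S_eq: "S = {z. \<exists>k::int. \<bar>t + z - of_int k\<bar> < d}"
    unfolding S_def t_def dist_int_lt by (simp add: algebra_simps)
  have Ssets: "S \<in> sets lborel" unfolding S_eq by measurable
  have Skm: "Sk k \<in> sets lborel" for k unfolding Sk_def by measurable
  have Skf: "emeasure lborel (Sk k) < \<infinity>" for k
  proof -
    have "emeasure lborel (Sk k) \<le> emeasure lborel {-a..a}" by (rule emeasure_mono) (auto simp: Sk_def)
    also have "\<dots> < \<infinity>" using a by (simp add: emeasure_lborel_Icc_eq)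
    finally show ?thesis .
  qed
  have finF: "finite F" unfolding F_def by simp
  have m1: "measure (uniform_measure lborel {-a..a}) S = measure lborel ({-a..a} \<inter> S) / measure lborel {-a..a}"
    using a Ssets by (intro measure_uniform_measure) auto
  have m2: "measure lborel {-a..a} = 2 * a" using a by (simp add: meas_Icc)
  have pt: "indicator ({-a..a} \<inter> S) z = (\<Sum>k\<in>F. indicator (Sk k) z :: real)" for z :: real
  proof (cases "z \<in> {-a..a} \<inter> S")
    case False
    then have "z \<notin> Sk k" for k unfolding Sk_def S_eq by auto
    then show ?thesis using False by simp
  next
    case True
    then obtain k0 where k0: "\<bar>t + z - of_int k0\<bar> < d" unfolding S_eq by auto
    have zk: "\<bar>z\<bar> \<le> a" using True by auto
    have uniq: "k = k0" if "\<bar>t + z - of_int k\<bar> < d" for k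
    proof -
      have "\<bar>of_int k - of_int k0\<bar> < (1::real)" using that k0 d by linarith
      then have "\<bar>k - k0\<bar> < 1" by linarith
      then show ?thesis by linarith
    qed
    have k0F: "k0 \<in> F"
    proof -
      have "\<bar>of_int k0\<bar> \<le> \<bar>t\<bar> + a + 1" using k0 zk d by linarith
      moreover have "\<bar>t\<bar> + a + 1 \<le> real_of_int R" unfolding R_def by (rule le_of_int_ceiling)
      ultimately have "real_of_int \<bar>k0\<bar> \<le> real_of_int R" by simp
      then have "\<bar>k0\<bar> \<le> R" by (simp only: of_int_le_iff)
      then show ?thesis unfolding F_def by (simp add: abs_le_iff)
    qed
    have "(\<Sum>k\<in>F. indicator (Sk k) z) = (\<Sum>k\<in>F. if k = k0 then 1 else (0::real))"
    proof (rule sum.cong[OF refl])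
      fix k assume "k \<in> F"
      show "indicator (Sk k) z = (if k = k0 then 1 else (0::real))"
      proof (cases "k = k0")
        case True
        then have "z \<in> Sk k" using k0 zk unfolding Sk_def by auto
        then show ?thesis using True by simp
      next
        case False
        then have "\<not> \<bar>t + z - of_int k\<bar> < d" using uniq by blast
        then have "z \<notin> Sk k" unfolding Sk_def by blast
        then show ?thesis using False by simp
      qed
    qed
    also have "\<dots> = 1" using k0F finF by simp
    finally show ?thesis using True by simp
  qed
  have "measure lborel ({-a..a} \<inter> S) = (\<integral>z. indicator ({-a..a} \<inter> S) z \<partial>lborel)" by simp
  also have "\<dots> = (\<integral>z. (\<Sum>k\<in>F. indicator (Sk k) z) \<partial>lborel)" by (simp only: pt)
  also have "\<dots> = (\<Sum>k\<in>F. (\<integral>z. indicator (Sk k) z \<partial>lborel))"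
    using Skm Skf by (subst Bochner_Integration.integral_sum) auto
  also have "\<dots> = (\<Sum>k\<in>F. measure lborel (TT t a d k))"
    by (rule sum.cong[OF refl]) (simp add: Sk_def translate_meas)
  also have "\<dots> = (\<Sum>k\<in>F. (\<integral>u. indicator (TT t a d k) u \<partial>lborel))" by simp
  also have "\<dots> = (\<integral>u. (\<Sum>k\<in>F. indicator (TT t a d k) u) \<partial>lborel)"
    using TT_sets TT_fin by (subst Bochner_Integration.integral_sum) auto
  finally have "measure lborel ({-a..a} \<inter> S) = (\<integral>u. (\<Sum>k\<in>F. indicator (TT t a d k) u) \<partial>lborel)" .
  then show ?thesis using m1 m2 unfolding S_def F_def R_def t_def by simp
qed



lemma Phi_eq:
  assumes "a \<ge> 0" "\<bar>u\<bar> < d" "d \<le> 1/2"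
  shows "(\<Sum>k\<in>{-\<lceil>\<bar>t\<bar> + a + 1\<rceil>..\<lceil>\<bar>t\<bar> + a + 1\<rceil>}. indicator (TT t a d k) u) = real (cnt (t - u) a)"
proof -
  define R where "R = \<lceil>\<bar>t\<bar> + a + 1\<rceil>"
  define F where "F = {-R..R}"
  have sub: "{k::int. \<bar>t - u - of_int k\<bar> \<le> a} \<subseteq> F"
  proof
    fix k assume "k \<in> {k::int. \<bar>t - u - of_int k\<bar> \<le> a}"
    then have "\<bar>t - u - of_int k\<bar> \<le> a" by simp
    then have "\<bar>real_of_int k\<bar> \<le> \<bar>t\<bar> + a + 1" using assms by linarith
    moreover have "\<bar>t\<bar> + a + 1 \<le> real_of_int R" unfolding R_def by (rule le_of_int_ceiling)
    ultimately have "real_of_int \<bar>k\<bar> \<le> real_of_int R" by simp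
    then have "\<bar>k\<bar> \<le> R" by (simp only: of_int_le_iff)
    then show "k \<in> F" unfolding F_def by (simp add: abs_le_iff)
  qed
  have "(\<Sum>k\<in>F. indicator (TT t a d k) u) = (\<Sum>k\<in>F. if k \<in> {k::int. \<bar>t - u - of_int k\<bar> \<le> a} then 1 else (0::real))"
    by (rule sum.cong[OF refl]) (use assms in \<open>auto simp: TT_def indicator_def\<close>)
  also have "\<dots> = real (card (F \<inter> {k::int. \<bar>t - u - of_int k\<bar> \<le> a}))"
    by (simp add: sum.If_cases F_def)
  also have "F \<inter> {k::int. \<bar>t - u - of_int k\<bar> \<le> a} = {k::int. \<bar>t - u - of_int k\<bar> \<le> a}" using sub by blast
  finally show ?thesis unfolding cnt_def F_def R_def by simp
qed

lemma Phi_zero: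
  assumes "\<not> \<bar>u\<bar> < d"
  shows "(\<Sum>k\<in>F. indicator (TT t a d k) u) = (0::real)"
  using assms by (simp add: TT_def indicator_def)

lemma Phi_int: "integrable lborel (\<lambda>u. (\<Sum>k\<in>F. indicator (TT t a d k) u) :: real)"
  using TT_sets TT_fin by (intro Bochner_Integration.integrable_sum) auto

context gsetting2 begin

lemma main_bound:
  assumes s: "s > 0" and e: "e > 0"
  shows "eventually (\<lambda>N. \<forall>y. \<bar>hfun x g s N y - 2 * s\<bar> < e) sequentially"
proof -
  define \<epsilon> where "\<epsilon> = min 1 (e / (28 * s))"
  have eps: "0 < \<epsilon>" "\<epsilon> \<le> 1" unfolding \<epsilon>_def using s e by auto
  have eps2: "14 * s * \<epsilon> \<le> e / 2"
  proof -
    have "\<epsilon> \<le> e / (28 * s)" unfolding \<epsilon>_def by simp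
    then have "14 * s * \<epsilon> \<le> 14 * s * (e / (28 * s))" using s by (intro mult_left_mono) auto
    also have "\<dots> = e / 2" using s by (simp add: field_simps)
    finally show ?thesis .
  qed
  obtain N0 where N0: "\<And>N w. N \<ge> N0 \<Longrightarrow> \<bar>(\<Sum>n\<in>{1..N}. ff n w) - real N\<bar> \<le> 7 * \<epsilon> * real N"
    using G_bound[OF eps] by blast
  show ?thesis using eventually_ge_at_top[of "max N0 (max 1 (nat \<lceil>2 * s\<rceil>))"]
  proof eventually_elim
    case (elim N)
    have NN0: "N \<ge> N0" and N1: "N \<ge> 1" and N2: "real N \<ge> 2 * s" using elim by auto
    define d where "d = s / real N"
    have d: "0 < d" "d \<le> 1/2" unfolding d_def using s N1 N2 by (auto simp: field_simps)
    show ?case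
    proof
      fix y
      define R where "R n = \<lceil>\<bar>x n - y\<bar> + g (real n) + 1\<rceil>" for n
      define Phi where "Phi n u = (\<Sum>k\<in>{-R n..R n}. indicator (TT (x n - y) (g (real n)) d k) u :: real)" for n u
      have gp: "g (real n) > 0" if "n \<in> {1..N}" for n using g_pos that by auto
      have "hfun x g s N y = (\<Sum>n\<in>{1..N}. (\<integral>u. Phi n u \<partial>lborel) / (2 * g (real n)))"
        unfolding hfun_def d_def[symmetric]
      proof (rule sum.cong[OF refl])
        fix n assume n: "n \<in> {1..N}"
        show "measure (uniform_measure lborel {- g (real n)..g (real n)}) {z. dist_int (x n + z - y) < d}
            = (\<integral>u. Phi n u \<partial>lborel) / (2 * g (real n))"
          unfolding Phi_def R_def by (rule per_n[OF gp[OF n] d])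
      qed
      also have "\<dots> = (\<Sum>n\<in>{1..N}. (\<integral>u. Phi n u / (2 * g (real n)) \<partial>lborel))"
        by simp
      also have "\<dots> = (\<integral>u. (\<Sum>n\<in>{1..N}. Phi n u / (2 * g (real n))) \<partial>lborel)"
        unfolding Phi_def using Phi_int by (subst Bochner_Integration.integral_sum) auto
      finally have h1: "hfun x g s N y = (\<integral>u. (\<Sum>n\<in>{1..N}. Phi n u / (2 * g (real n))) \<partial>lborel)" .
      have intS: "integrable lborel (\<lambda>u. \<Sum>n\<in>{1..N}. Phi n u / (2 * g (real n)))"
        unfolding Phi_def using TT_sets TT_fin by (intro Bochner_Integration.integrable_sum Bochner_Integration.integrable_divide) auto
      have pw: "(\<Sum>n\<in>{1..N}. Phi n u / (2 * g (real n))) = indicator {-d<..<d} u * (\<Sum>n\<in>{1..N}. ff n (y + u))" for u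
      proof (cases "\<bar>u\<bar> < d")
        case True
        have "Phi n u / (2 * g (real n)) = ff n (y + u)" if "n \<in> {1..N}" for n
        proof -
          have "Phi n u = real (cnt (x n - y - u) (g (real n)))"
            unfolding Phi_def R_def using Phi_eq[of "g (real n)" u d "x n - y"] gp[OF that] True d by simp
          then show ?thesis unfolding ff_def by (simp add: algebra_simps)
        qed
        then show ?thesis using True by (simp add: indicator_def abs_less_iff)
      next
        case False
        then have "u \<notin> {-d<..<d}" by auto
        then have "indicator {-d<..<d} u = (0::real)" by simp
        then show ?thesis unfolding Phi_def using Phi_zero[OF False] by simp
      qed
      have intI: "integrable lborel (\<lambda>u. c * indicator {-d<..<d} u :: real)" for c
        using d by (intro Bochner_Integration.integrable_mult_right integrable_real_indicator) auto
      have intV: "(\<integral>u. c * indicator {-d<..<d} u \<partial>lborel) = c * (2 * d)" for c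
        using d by (simp add: meas_Ioo)
      have Gb: "\<bar>(\<Sum>n\<in>{1..N}. ff n w) - real N\<bar> \<le> 7 * \<epsilon> * real N" for w by (rule N0[OF NN0])
      have up: "hfun x g s N y \<le> (real N + 7 * \<epsilon> * real N) * (2 * d)"
      proof -
        have "hfun x g s N y \<le> (\<integral>u. (real N + 7 * \<epsilon> * real N) * indicator {-d<..<d} u \<partial>lborel)"
          unfolding h1
        proof (rule integral_mono[OF intS intI])
          fix u :: real
          have "(\<Sum>n\<in>{1..N}. ff n (y + u)) \<le> real N + 7 * \<epsilon> * real N" using Gb[of "y + u"] by linarith
          then show "(\<Sum>n\<in>{1..N}. Phi n u / (2 * g (real n))) \<le> (real N + 7 * \<epsilon> * real N) * indicator {-d<..<d} u"
            unfolding pw by (simp add: indicator_def)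
        qed
        then show ?thesis unfolding intV .
      qed
      have lo: "hfun x g s N y \<ge> (real N - 7 * \<epsilon> * real N) * (2 * d)"
      proof -
        have "hfun x g s N y \<ge> (\<integral>u. (real N - 7 * \<epsilon> * real N) * indicator {-d<..<d} u \<partial>lborel)"
          unfolding h1
        proof (rule integral_mono[OF intI intS])
          fix u :: real
          have "(\<Sum>n\<in>{1..N}. ff n (y + u)) \<ge> real N - 7 * \<epsilon> * real N" using Gb[of "y + u"] by linarith
          then show "(real N - 7 * \<epsilon> * real N) * indicator {-d<..<d} u \<le> (\<Sum>n\<in>{1..N}. Phi n u / (2 * g (real n)))"
            unfolding pw by (simp add: indicator_def)
        qed
        then show ?thesis unfolding intV .
      qed
      have Nd: "real N * (2 * d) = 2 * s" unfolding d_def using N1 by simp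
      have "(real N + 7 * \<epsilon> * real N) * (2 * d) = (1 + 7 * \<epsilon>) * (real N * (2 * d))"
        by (simp add: algebra_simps)
      also have "\<dots> = 2 * s + 14 * s * \<epsilon>" unfolding Nd by (simp add: algebra_simps)
      finally have q1: "(real N + 7 * \<epsilon> * real N) * (2 * d) = 2 * s + 14 * s * \<epsilon>" .
      have q2: "(real N - 7 * \<epsilon> * real N) * (2 * d) = (1 - 7 * \<epsilon>) * (real N * (2 * d))"
        by (simp add: algebra_simps)
      have q3: "(1 - 7 * \<epsilon>) * (2 * s) = 2 * s - 14 * s * \<epsilon>" by (simp add: algebra_simps)
      have "(real N - 7 * \<epsilon> * real N) * (2 * d) = 2 * s - 14 * s * \<epsilon>" using q2 q3 unfolding Nd by simp
      note q1 this
      then show "\<bar>hfun x g s N y - 2 * s\<bar> < e" using up lo eps2 e q1 by (simp add: abs_less_iff)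
    qed
  qed
qed

end

theorem mainTheorem3:
  fixes x :: "nat \<Rightarrow> real" and g :: "real \<Rightarrow> real" and s :: real
  assumes g_pos: "\<And>t. t \<ge> 1 \<Longrightarrow> g t > 0"
    and g_decr: "\<And>t u. 1 \<le> t \<Longrightarrow> t \<le> u \<Longrightarrow> g u \<le> g t"
    and g_disc: "filterlim (\<lambda>N. g (real N) / discrepancy x N) at_top sequentially"
    and g_Ng: "filterlim (\<lambda>N. real N * g (real N)) at_top sequentially"
    and g_ratio: "(\<lambda>N. g (real N * (1 + maxdisc x N / (real N * g (real N)))) / g (real N))
                    \<longlonglongrightarrow> 1"
    and s_pos: "s > 0"
  shows "uniform_limit UNIV (\<lambda>N y. hfun x g s N y) (\<lambda>y. 2 * s) sequentially"
proof -
  interpret gsetting2 x g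
    by unfold_locales (use g_pos g_decr g_disc g_ratio in auto)
  show ?thesis
  proof (rule uniform_limitI)
    fix e :: real assume e: "e > 0"
    show "\<forall>\<^sub>F N in sequentially. \<forall>y\<in>UNIV. dist (hfun x g s N y) (2 * s) < e"
      using main_bound[OF s_pos e] by eventually_elim (simp add: dist_real_def)
  qed
qed


end
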